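(* Let $W,V$ be subspaces of $\mathbb{R}^n$ with $\mathbb{R}^n=W\oplus V^\perp$, and let $\mu\in\mathcal{P}_2(W)$ be a probabilistic frame for $W$ with frame operator $\mathbf{S}_\mu$. A measurable map $T:W\to V$ is such that $T_\#\mu$ is an oblique dual probabilistic frame of $\mu$ on $V$ with respect to the coupling $(\mathbf{Id},T)_\#\mu$ (i.e. $T_\#\mu\in\mathcal{P}_2(V)$ and $\int_W\mathbf{x}\,T(\mathbf{x})^t\,d\mu(\mathbf{x})=\boldsymbol{\pi}_{WV^\perp}$) if and only if there is a measurable map $h:W\to V$ with $h_\#\mu\in\mathcal{P}_2(V)$ such that for all $\mathbf{x}\in W$, $$T(\mathbf{x})=\boldsymbol{\pi}_{VW^\perp}\mathbf{S}_\mu^\dagger\mathbf{x}+h(\mathbf{x})-\int_W\langle\mathbf{S}_\mu^\dagger\mathbf{x},\mathbf{y}\rangle\,h(\mathbf{y})\,d\mu(\mathbf{y}).$$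
   Context: $\mathcal{P}_2(S)$ denotes Borel probability measures on $\mathbb{R}^n$ concentrated on the subspace $S$ with finite second moment. $\mu\in\mathcal{P}_2(W)$ is a probabilistic frame for $W$ if there exist $0<A\le B<\infty$ with $A\|\mathbf{x}\|^2\le\int_W|\langle\mathbf{x},\mathbf{y}\rangle|^2d\mu(\mathbf{y})\le B\|\mathbf{x}\|^2$ for all $\mathbf{x}\in W$; its frame operator is $\mathbf{S}_\mu=\int_W\mathbf{y}\mathbf{y}^td\mu(\mathbf{y})$, and $\mathbf{S}_\mu^\dagger$ is its Moore–Penrose inverse. $T_\#\mu(E)=\mu(T^{-1}(E))$ and $(\mathbf{Id},T)_\#\mu$ is the pushforward of $\mu$ under $\mathbf{x}\mapsto(\mathbf{x},T(\mathbf{x}))$. $\boldsymbol{\pi}_{WV^\perp}$ is the oblique projection onto $W$ along $V^\perp$, and $\boldsymbol{\pi}_{VW^\perp}$ the oblique projection onto $V$ along $W^\perp$. $\nu\in\mathcal{P}_2(V)$ is an oblique dual probabilistic frame of $\mu$ on $V$ with respect to a coupling $\gamma$ of $\mu$ and $\nu$ if $\int_{W\times V}\mathbf{x}\mathbf{y}^t\,d\gamma(\mathbf{x},\mathbf{y})=\boldsymbol{\pi}_{WV^\perp}$. *)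

theory Defs
  imports "HOL-Probability.Probability"
begin

definition orth_comp :: "(real^'n) set \<Rightarrow> (real^'n) set" where
  "orth_comp V = {x. \<forall>v\<in>V. x \<bullet> v = 0}"

definition outer :: "real^'n \<Rightarrow> real^'n \<Rightarrow> real^'n^'n" where
  "outer x y = (\<chi> i j. x $ i * y $ j)"

definition direct_sum_UNIV :: "(real^'n) set \<Rightarrow> (real^'n) set \<Rightarrow> bool" where
  "direct_sum_UNIV W U \<longleftrightarrow> subspace W \<and> subspace U \<and> W \<inter> U = {0} \<and>
     (\<forall>x. \<exists>w\<in>W. \<exists>u\<in>U. x = w + u)"

definition oblique_proj :: "(real^'n) set \<Rightarrow> (real^'n) set \<Rightarrow> real^'n^'n" where
  "oblique_proj W U = matrix (\<lambda>x. THE w. w \<in> W \<and> x - w \<in> U)"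

definition mp_inverse :: "real^'n^'n \<Rightarrow> real^'n^'n" where
  "mp_inverse A = (THE B. A ** B ** A = A \<and> B ** A ** B = B \<and>
      transpose (A ** B) = A ** B \<and> transpose (B ** A) = B ** A)"

definition P2 :: "(real^'n) set \<Rightarrow> (real^'n) measure \<Rightarrow> bool" where
  "P2 S M \<longleftrightarrow> prob_space M \<and> sets M = sets borel \<and> (AE y in M. y \<in> S) \<and>
     integrable M (\<lambda>y. norm y ^ 2)"

definition frame_operator :: "(real^'n) measure \<Rightarrow> real^'n^'n" where
  "frame_operator M = (\<integral>y. outer y y \<partial>M)"

definition prob_frame :: "(real^'n) set \<Rightarrow> (real^'n) measure \<Rightarrow> bool" where
  "prob_frame W M \<longleftrightarrow> P2 W M \<and> (\<exists>A B. 0 < A \<and> A \<le> B \<and>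
     (\<forall>x\<in>W. A * norm x ^ 2 \<le> (\<integral>y. (x \<bullet> y) ^ 2 \<partial>M) \<and>
             (\<integral>y. (x \<bullet> y) ^ 2 \<partial>M) \<le> B * norm x ^ 2))"

end

theory Submission
  imports Defs
begin


lemma outer_mulv: "outer x v *v z = (v \<bullet> z) *\<^sub>R x"
  by (simp add: outer_def matrix_vector_mult_def inner_vec_def vec_eq_iff sum_distrib_left mult_ac)

lemma transpose_outer: "transpose (outer x v) = outer v x"
  by (simp add: outer_def transpose_def vec_eq_iff)

lemma outer_mult_right: "outer x v ** B = outer x (transpose B *v v)"
  by (simp add: outer_def matrix_matrix_mult_def matrix_vector_mult_def transpose_def vec_eq_iff sum_distrib_left mult_ac)

lemma outer_mult_left: "B ** outer x v = outer (B *v x) v"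
  by (simp add: outer_def matrix_matrix_mult_def matrix_vector_mult_def vec_eq_iff sum_distrib_right sum_distrib_left mult_ac)

lemma outer_add_right: "outer x (u + v) = outer x u + outer x v"
  by (simp add: outer_def vec_eq_iff algebra_simps)
lemma outer_diff_right: "outer x (u - v) = outer x u - outer x v"
  by (simp add: outer_def vec_eq_iff algebra_simps)
lemma outer_zero_left[simp]: "outer 0 v = 0"
  by (simp add: outer_def vec_eq_iff)

lemma continuous_outer: "continuous_on UNIV (\<lambda>p. outer (fst p) (snd p :: real^'n) :: real^'n^'n)"
  unfolding outer_def by (intro continuous_intros)

lemma measurable_outer:
  assumes "f \<in> borel_measurable M" "g \<in> borel_measurable M"
  shows "(\<lambda>x. outer (f x) (g x)) \<in> borel_measurable M"
  using borel_measurable_continuous_on[OF continuous_outer borel_measurable_Pair[OF assms]] by simp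

lemma norm_outer: "norm (outer x v) \<le> real CARD('n) * (norm x * norm v)" for x v :: "real^'n"
proof -
  have "norm (outer x v) \<le> (\<Sum>i\<in>UNIV. norm (outer x v $ i))" unfolding norm_vec_def by (rule L2_set_le_sum) auto
  also have "\<dots> \<le> (\<Sum>i\<in>(UNIV::'n set). norm x * norm v)"
  proof (intro sum_mono)
    fix i
    have "outer x v $ i = x $ i *\<^sub>R v" by (simp add: outer_def vec_eq_iff)
    then show "norm (outer x v $ i) \<le> norm x * norm v"
      by (simp add: component_le_norm_cart mult_right_mono)
  qed
  finally show ?thesis by simp
qed

lemma ds_ex1:
  assumes "direct_sum_UNIV W U"
  shows "\<exists>!w. w \<in> W \<and> x - w \<in> U"
proof -
  from assms have sW: "subspace W" and sU: "subspace U" and I: "W \<inter> U = {0}"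
    and D: "\<forall>x. \<exists>w\<in>W. \<exists>u\<in>U. x = w + u" by (auto simp: direct_sum_UNIV_def)
  obtain w u where "w \<in> W" "u \<in> U" "x = w + u" using D by blast
  then have ex: "w \<in> W \<and> x - w \<in> U" by simp
  show ?thesis
  proof (rule ex1I[of _ w])
    show "w \<in> W \<and> x - w \<in> U" by (rule ex)
    fix w' assume w': "w' \<in> W \<and> x - w' \<in> U"
    have "w' - w \<in> W" using w' ex sW by (simp add: subspace_diff)
    moreover have "w' - w \<in> U" using subspace_diff[OF sU, of "x - w" "x - w'"] w' ex by simp
    ultimately have "w' - w = 0" using I by blast
    then show "w' = w" by simp
  qed
qed

definition opf :: "(real^'n) set \<Rightarrow> (real^'n) set \<Rightarrow> real^'n \<Rightarrow> real^'n" where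
  "opf W U = (\<lambda>x. THE w. w \<in> W \<and> x - w \<in> U)"

lemma opf_prop:
  assumes "direct_sum_UNIV W U"
  shows "opf W U x \<in> W \<and> x - opf W U x \<in> U"
  unfolding opf_def using theI'[OF ds_ex1[OF assms, of x]] .

lemma opf_eq:
  assumes "direct_sum_UNIV W U" "w \<in> W" "x - w \<in> U"
  shows "opf W U x = w"
  using ds_ex1[OF assms(1), of x] opf_prop[OF assms(1), of x] assms(2,3) by blast

lemma opf_linear:
  assumes ds: "direct_sum_UNIV W U"
  shows "linear (opf W U)"
proof -
  from ds have sW: "subspace W" and sU: "subspace U" by (auto simp: direct_sum_UNIV_def)
  show ?thesis
  proof (rule linearI)
    fix x y
    show "opf W U (x + y) = opf W U x + opf W U y"
      apply (rule opf_eq[OF ds])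
      using opf_prop[OF ds, of x] opf_prop[OF ds, of y] subspace_add[OF sW] subspace_add[OF sU, of "x - opf W U x" "y - opf W U y"]
      by (auto simp: algebra_simps)
  next
    fix c :: real and x
    show "opf W U (c *\<^sub>R x) = c *\<^sub>R opf W U x"
      apply (rule opf_eq[OF ds])
      using opf_prop[OF ds, of x] subspace_scale[OF sW] subspace_scale[OF sU, of "x - opf W U x" c]
      by (auto simp: algebra_simps)
  qed
qed

lemma oblique_proj_mulv:
  assumes "direct_sum_UNIV W U"
  shows "oblique_proj W U *v x = opf W U x"
proof -
  have "oblique_proj W U = matrix (opf W U)" unfolding oblique_proj_def opf_def by simp
  then show ?thesis using matrix_vector_mul(2)[OF opf_linear[OF assms]] by metis
qed

lemma oproj_prop:
  assumes "direct_sum_UNIV W U"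
  shows "oblique_proj W U *v x \<in> W" "x - oblique_proj W U *v x \<in> U"
  using opf_prop[OF assms] oblique_proj_mulv[OF assms] by auto

lemma oproj_eq:
  assumes "direct_sum_UNIV W U" "w \<in> W" "x - w \<in> U"
  shows "oblique_proj W U *v x = w"
  using opf_eq[OF assms] oblique_proj_mulv[OF assms(1)] by auto

lemma subspace_orth_comp: "subspace (orth_comp V)"
  unfolding subspace_def orth_comp_def by (auto simp: inner_add_left)

lemma orth_comp_orth_comp:
  assumes "subspace V"
  shows "orth_comp (orth_comp V) = V"
proof
  show "V \<subseteq> orth_comp (orth_comp V)" by (auto simp: orth_comp_def inner_commute)
  show "orth_comp (orth_comp V) \<subseteq> V"
  proof
    fix x assume x: "x \<in> orth_comp (orth_comp V)"
    obtain y z where y: "y \<in> span V" and z: "\<And>w. w \<in> span V \<Longrightarrow> orthogonal z w" and xyz: "x = y + z"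
      using orthogonal_subspace_decomp_exists[of V x] by metis
    have sV: "span V = V" using assms by (simp add: span_eq_iff)
    have zc: "z \<in> orth_comp V" using z sV by (auto simp: orth_comp_def orthogonal_def)
    have "x \<bullet> z = 0" using x zc by (auto simp: orth_comp_def)
    moreover have "y \<bullet> z = 0" using z[OF y] by (simp add: orthogonal_def inner_commute)
    ultimately have "z \<bullet> z = 0" using xyz by (simp add: inner_add_left)
    then have "z = 0" by simp
    then show "x \<in> V" using xyz y sV by simp
  qed
qed

lemma ds_orth:
  assumes "subspace W"
  shows "direct_sum_UNIV W (orth_comp W)"
  unfolding direct_sum_UNIV_def
proof (intro conjI allI)
  show "W \<inter> orth_comp W = {0}" using assms
    by (auto simp: orth_comp_def subspace_0)
  fix x
  obtain y z where y: "y \<in> span W" and z: "\<And>w. w \<in> span W \<Longrightarrow> orthogonal z w" and xyz: "x = y + z"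
      using orthogonal_subspace_decomp_exists[of W x] by metis
  have sV: "span W = W" using assms by (simp add: span_eq_iff)
  show "\<exists>w\<in>W. \<exists>u\<in>orth_comp W. x = w + u"
    using y z xyz sV by (auto simp: orth_comp_def orthogonal_def)
qed (use assms subspace_orth_comp in auto)

lemma ds_dual:
  assumes sW: "subspace W" and sV: "subspace V" and ds: "direct_sum_UNIV W (orth_comp V)"
  shows "direct_sum_UNIV V (orth_comp W)"
    and "oblique_proj V (orth_comp W) = transpose (oblique_proj W (orth_comp V))"
proof -
  let ?P = "oblique_proj W (orth_comp V)"
  have PW: "?P *v w = w" if "w \<in> W" for w
    using oproj_eq[OF ds that, of w] subspace_0[OF subspace_orth_comp[of V]] by simp
  have PU: "?P *v u = 0" if "u \<in> orth_comp V" for u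
    using oproj_eq[OF ds subspace_0[OF sW], of u] that by simp
  have inV: "transpose ?P *v x \<in> V" for x
  proof -
    have "transpose ?P *v x \<in> orth_comp (orth_comp V)"
      unfolding orth_comp_def[of "orth_comp V"]
    proof (intro CollectI ballI)
      fix u assume "u \<in> orth_comp V"
      have "(transpose ?P *v x) \<bullet> u = x \<bullet> (?P *v u)"
        by (metis dot_lmul_matrix transpose_matrix_vector transpose_transpose vector_transpose_matrix inner_commute)
      then show "(transpose ?P *v x) \<bullet> u = 0" using PU[OF \<open>u \<in> orth_comp V\<close>] by simp
    qed
    then show ?thesis using orth_comp_orth_comp[OF sV] by simp
  qed
  have inWc: "x - transpose ?P *v x \<in> orth_comp W" for x
    unfolding orth_comp_def[of W]
  proof (intro CollectI ballI)
    fix w assume "w \<in> W"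
    have "(transpose ?P *v x) \<bullet> w = x \<bullet> (?P *v w)"
      by (metis dot_lmul_matrix transpose_matrix_vector transpose_transpose vector_transpose_matrix inner_commute)
    then show "(x - transpose ?P *v x) \<bullet> w = 0" using PW[OF \<open>w \<in> W\<close>] by (simp add: inner_diff_left)
  qed
  have I: "V \<inter> orth_comp W = {0}"
  proof safe
    fix v assume v: "v \<in> V" "v \<in> orth_comp W"
    obtain w u where "w \<in> W" "u \<in> orth_comp V" "v = w + u" using ds unfolding direct_sum_UNIV_def by blast
    then have "v \<bullet> v = v \<bullet> w + v \<bullet> u" by (simp add: inner_add_right)
    also have "\<dots> = 0" using v \<open>w \<in> W\<close> \<open>u \<in> orth_comp V\<close> by (auto simp: orth_comp_def) (metis inner_commute)
    finally show "v = 0" by simp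
  qed (use sV subspace_0 subspace_orth_comp in auto)
  show ds2: "direct_sum_UNIV V (orth_comp W)"
    unfolding direct_sum_UNIV_def
  proof (intro conjI allI)
    fix x show "\<exists>w\<in>V. \<exists>u\<in>orth_comp W. x = w + u"
      using inV[of x] inWc[of x] by (metis add.commute diff_add_cancel)
  qed (use sV I subspace_orth_comp in auto)
  show "oblique_proj V (orth_comp W) = transpose ?P"
    unfolding matrix_eq using oproj_eq[OF ds2 inV inWc] by simp
qed


lemma mm_add_r: "(A + B) ** C = A ** C + B ** (C::real^'n^'n)"
  by (simp add: matrix_matrix_mult_def vec_eq_iff algebra_simps sum.distrib)
lemma mm_add_l: "C ** (A + B) = C ** A + C ** (B::real^'n^'n)"
  by (simp add: matrix_matrix_mult_def vec_eq_iff algebra_simps sum.distrib)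
lemma mm_diff_r: "(A - B) ** C = A ** C - B ** (C::real^'n^'n)"
  by (simp add: matrix_matrix_mult_def vec_eq_iff algebra_simps sum_subtractf)
lemma mm_diff_l: "C ** (A - B) = C ** A - C ** (B::real^'n^'n)"
  by (simp add: matrix_matrix_mult_def vec_eq_iff algebra_simps sum_subtractf)
lemma transpose_add: "transpose (A + B) = transpose A + transpose (B::real^'n^'n)"
  by (simp add: transpose_def vec_eq_iff)
lemma transpose_diff: "transpose (A - B) = transpose A - transpose (B::real^'n^'n)"
  by (simp add: transpose_def vec_eq_iff)

definition mp_cond :: "real^'n^'n \<Rightarrow> real^'n^'n \<Rightarrow> bool" where
  "mp_cond A B \<longleftrightarrow> A ** B ** A = A \<and> B ** A ** B = B \<and>
      transpose (A ** B) = A ** B \<and> transpose (B ** A) = B ** A"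

lemma mp_unique:
  assumes "mp_cond A B1" "mp_cond A B2"
  shows "B1 = B2"
proof -
  from assms have a1: "A ** B1 ** A = A" and b1: "B1 ** A ** B1 = B1" and c1: "transpose (A ** B1) = A ** B1"
    and d1: "transpose (B1 ** A) = B1 ** A" unfolding mp_cond_def by auto
  from assms have a2: "A ** B2 ** A = A" and b2: "B2 ** A ** B2 = B2" and c2: "transpose (A ** B2) = A ** B2"
    and d2: "transpose (B2 ** A) = B2 ** A" unfolding mp_cond_def by auto
  have "B1 = B1 ** (A ** B1)" by (simp only: b1 matrix_mul_assoc)
  also have "\<dots> = B1 ** transpose (A ** B1)" by (simp only: c1)
  also have "\<dots> = B1 ** transpose (A ** B2 ** A ** B1)" by (simp only: a2)
  also have "\<dots> = B1 ** (transpose (A ** B1) ** transpose (A ** B2))"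
    by (simp only: matrix_transpose_mul matrix_mul_assoc)
  also have "\<dots> = B1 ** (A ** B1 ** (A ** B2))" by (simp only: c1 c2)
  also have "\<dots> = (B1 ** A ** B1) ** A ** B2" by (simp only: matrix_mul_assoc)
  also have "\<dots> = B1 ** A ** B2" by (simp only: b1)
  finally have e1: "B1 = B1 ** A ** B2" .
  have "B2 = (B2 ** A) ** B2" by (simp only: b2)
  also have "\<dots> = transpose (B2 ** A) ** B2" by (simp only: d2)
  also have "\<dots> = transpose (B2 ** (A ** B1 ** A)) ** B2" by (simp only: a1)
  also have "\<dots> = (transpose (B1 ** A) ** transpose (B2 ** A)) ** B2"
    by (simp only: matrix_transpose_mul matrix_mul_assoc)
  also have "\<dots> = B1 ** A ** (B2 ** A ** B2)" by (simp only: d1 d2 matrix_mul_assoc)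
  also have "\<dots> = B1 ** A ** B2" by (simp only: b2)
  finally show ?thesis using e1 by simp
qed

lemma mp_inverse_eq:
  assumes "mp_cond A B" shows "mp_inverse A = B"
  unfolding mp_inverse_def
proof (rule the_equality)
  show "A ** B ** A = A \<and> B ** A ** B = B \<and> transpose (A ** B) = A ** B \<and> transpose (B ** A) = B ** A"
    using assms unfolding mp_cond_def .
  fix B' assume "A ** B' ** A = A \<and> B' ** A ** B' = B' \<and> transpose (A ** B') = A ** B' \<and> transpose (B' ** A) = B' ** A"
  then have "mp_cond A B'" unfolding mp_cond_def .
  then show "B' = B" using mp_unique[OF _ assms] by blast
qed

lemma mp_cond_transpose:
  assumes "transpose A = A" "mp_cond A B"
  shows "mp_cond A (transpose B)"
proof -
  from assms have a1: "A ** B ** A = A" and b1: "B ** A ** B = B" and c1: "transpose (A ** B) = A ** B"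
    and d1: "transpose (B ** A) = B ** A" by (auto simp: mp_cond_def)
  have "A ** transpose B ** A = transpose (A ** B ** A)" using assms(1)
    by (simp add: matrix_transpose_mul matrix_mul_assoc)
  moreover have "transpose B ** A ** transpose B = transpose (B ** A ** B)" using assms(1)
    by (simp add: matrix_transpose_mul matrix_mul_assoc)
  moreover have "transpose (A ** transpose B) = A ** transpose B"
    using assms(1) d1 by (metis matrix_transpose_mul transpose_transpose)
  moreover have "transpose (transpose B ** A) = transpose B ** A"
    using assms(1) c1 by (metis matrix_transpose_mul transpose_transpose)
  ultimately show ?thesis using a1 b1 assms(1) by (simp add: mp_cond_def)
qed

lemma mp_exists:
  fixes S Pi :: "real^'n^'n"
  assumes tS: "transpose S = S" and tP: "transpose Pi = Pi" and PP: "Pi ** Pi = Pi"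
    and SP: "S ** Pi = S" and PS: "Pi ** S = S"
    and inj: "\<And>x. (S + mat 1 - Pi) *v x = 0 \<Longrightarrow> x = 0"
  shows "transpose (mp_inverse S) = mp_inverse S \<and> S ** mp_inverse S = Pi"
proof -
  let ?S' = "S + mat 1 - Pi"
  have "inj ((*v) ?S')"
  proof (rule injI)
    fix x y assume "?S' *v x = ?S' *v y"
    then have "?S' *v (x - y) = 0" by (simp add: linear_diff[OF matrix_vector_mul_linear])
    then have "x - y = 0" by (rule inj)
    then show "x = y" by simp
  qed
  then obtain C where CS': "C ** ?S' = mat 1" using matrix_left_invertible_injective by blast
  then have S'C: "?S' ** C = mat 1" using matrix_left_right_inverse by blast
  have S'P: "?S' ** Pi = S" using SP PP by (simp add: mm_add_r mm_diff_r)
  have PS': "Pi ** ?S' = S" using PS PP by (simp add: mm_add_l mm_diff_l)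
  have "C ** S = C ** (?S' ** Pi)" using S'P by simp
  also have "\<dots> = (C ** ?S') ** Pi" by (rule matrix_mul_assoc)
  finally have CS: "C ** S = Pi" using CS' by simp
  have "S ** C = (Pi ** ?S') ** C" using PS' by simp
  also have "\<dots> = Pi ** (?S' ** C)" by (rule matrix_mul_assoc[symmetric])
  finally have SC: "S ** C = Pi" using S'C by simp
  have "Pi ** C = (C ** S) ** C" using CS by simp
  also have "\<dots> = C ** (S ** C)" by (rule matrix_mul_assoc[symmetric])
  finally have PC: "Pi ** C = C ** Pi" using SC by simp
  define B where "B = C ** Pi"
  have SB: "S ** B = Pi" unfolding B_def using SC PP by (simp add: matrix_mul_assoc)
  have "B ** S = C ** (Pi ** S)" unfolding B_def by (rule matrix_mul_assoc[symmetric])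
  then have BS: "B ** S = Pi" using PS CS by simp
  have "mp_cond S B" unfolding mp_cond_def
  proof (intro conjI)
    show "S ** B ** S = S" using SB PS by simp
    have "B ** S ** B = Pi ** (C ** Pi)" using BS unfolding B_def by simp
    also have "\<dots> = (Pi ** C) ** Pi" by (rule matrix_mul_assoc)
    also have "\<dots> = C ** (Pi ** Pi)" using PC by (simp add: matrix_mul_assoc)
    finally show "B ** S ** B = B" using PP unfolding B_def by simp
    show "transpose (S ** B) = S ** B" using SB tP by simp
    show "transpose (B ** S) = B ** S" using BS tP by simp
  qed
  then have e: "mp_inverse S = B" by (rule mp_inverse_eq)
  have "mp_inverse S = transpose B" using mp_cond_transpose[OF tS \<open>mp_cond S B\<close>] by (rule mp_inverse_eq)
  then show ?thesis using e SB by (metis transpose_transpose)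
qed



lemma bl_mv: "bounded_linear (\<lambda>G::real^'n^'m. G *v z)"
  unfolding linear_conv_bounded_linear[symmetric]
  by (rule linearI) (auto simp: vec_eq_iff matrix_vector_mult_def sum.distrib algebra_simps sum_distrib_left)

lemma bl_transpose: "bounded_linear (\<lambda>G::real^'n^'m. transpose G)"
  unfolding linear_conv_bounded_linear[symmetric]
  by (rule linearI) (auto simp: vec_eq_iff transpose_def)

lemma bl_mml: "bounded_linear (\<lambda>G::real^'n^'n. A ** G)"
  unfolding linear_conv_bounded_linear[symmetric]
  by (rule linearI) (auto simp: vec_eq_iff matrix_matrix_mult_def sum.distrib algebra_simps sum_distrib_left)

lemma bl_mmr: "bounded_linear (\<lambda>G::real^'n^'n. G ** A)"
  unfolding linear_conv_bounded_linear[symmetric]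
  by (rule linearI) (auto simp: vec_eq_iff matrix_matrix_mult_def sum.distrib algebra_simps sum_distrib_left)

lemma bl_tmv: "bounded_linear (\<lambda>G::real^'n^'n. transpose G *v z)"
  using bounded_linear_compose[OF bl_mv bl_transpose] by (simp add: o_def)

lemma bl_quad: "bounded_linear (\<lambda>G::real^'n^'n. (G *v z) \<bullet> z)"
  using bounded_linear_compose[OF bounded_linear_inner_left[of z] bl_mv[of z]] by (simp add: o_def)

lemma meas_mv: "f \<in> borel_measurable M \<Longrightarrow> (\<lambda>x. (A::real^'n^'m) *v f x) \<in> borel_measurable M"
  by (rule borel_measurable_continuous_on[where f="\<lambda>x. A *v x"])
     (auto intro: linear_continuous_on matrix_vector_mul_bounded_linear)

lemma integrable_outer:
  fixes f g :: "'a \<Rightarrow> real^'n"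
  assumes "f \<in> borel_measurable M" "g \<in> borel_measurable M"
    "integrable M (\<lambda>x. norm (f x)^2)" "integrable M (\<lambda>x. norm (g x)^2)"
  shows "integrable M (\<lambda>x. outer (f x) (g x))"
proof (rule Bochner_Integration.integrable_bound[where f="\<lambda>x. real CARD('n) * (norm (f x)^2 + norm (g x)^2)"])
  show "integrable M (\<lambda>x. real CARD('n) * (norm (f x)^2 + norm (g x)^2))"
    using assms by (intro integrable_mult_right Bochner_Integration.integrable_add)
  show "(\<lambda>x. outer (f x) (g x)) \<in> borel_measurable M" using assms by (intro measurable_outer)
  show "AE x in M. norm (outer (f x) (g x)) \<le> norm (real CARD('n) * (norm (f x)^2 + norm (g x)^2))"
  proof (intro AE_I2)
    fix x
    have fg: "norm (f x) * norm (g x) \<le> norm (f x)^2 + norm (g x)^2"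
      using sum_squares_bound[of "norm (f x)" "norm (g x)"] mult_nonneg_nonneg[OF norm_ge_zero norm_ge_zero, of "f x" "g x"]
      by linarith
    then have "norm (outer (f x) (g x)) \<le> real CARD('n) * (norm (f x)^2 + norm (g x)^2)"
      using norm_outer[of "f x" "g x"] mult_left_mono[OF fg, of "real CARD('n)"] by linarith
    then show "norm (outer (f x) (g x)) \<le> norm (real CARD('n) * (norm (f x)^2 + norm (g x)^2))"
      by simp
  qed
qed

lemma integral_apply:
  fixes g :: "real^'n \<Rightarrow> real^'n"
  assumes "integrable M (\<lambda>y. outer y (g y))"
  shows "(\<integral>y. (z \<bullet> y) *\<^sub>R g y \<partial>M) = transpose (\<integral>y. outer y (g y) \<partial>M) *v z"
proof -
  have "(\<integral>y. transpose (outer y (g y)) *v z \<partial>M) = transpose (\<integral>y. outer y (g y) \<partial>M) *v z"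
    by (rule integral_bounded_linear[OF bl_tmv assms])
  moreover have "transpose (outer y (g y)) *v z = (z \<bullet> y) *\<^sub>R g y" for y
    by (simp add: transpose_outer outer_mulv inner_commute)
  ultimately show ?thesis by simp
qed



theorem proposition4p6:
  fixes W V :: "(real^'n) set" and M :: "(real^'n) measure"
    and T :: "real^'n \<Rightarrow> real^'n"
  assumes "subspace W" and "subspace V"
    and "direct_sum_UNIV W (orth_comp V)"
    and "prob_frame W M"
    and "T \<in> borel_measurable borel" and "\<forall>x\<in>W. T x \<in> V"
  shows "(P2 V (distr M borel T) \<and>
          (\<integral>x. outer x (T x) \<partial>M) = oblique_proj W (orth_comp V))
     \<longleftrightarrow>
         (\<exists>h :: real^'n \<Rightarrow> real^'n. h \<in> borel_measurable borel \<and> (\<forall>x\<in>W. h x \<in> V) \<and>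
            P2 V (distr M borel h) \<and>
            (\<forall>x\<in>W. T x = oblique_proj V (orth_comp W) *v (mp_inverse (frame_operator M) *v x)
                     + h x
                     - (\<integral>y. ((mp_inverse (frame_operator M) *v x) \<bullet> y) *\<^sub>R h y \<partial>M)))"
proof -
  have P2W: "P2 W M" using assms(4) unfolding prob_frame_def by blast
  then have ps: "prob_space M" and sM: "sets M = sets borel" and AEW: "AE y in M. y \<in> W"
    and intM: "integrable M (\<lambda>y. norm y ^ 2)" unfolding P2_def by auto
  obtain A where A0: "0 < A" and Alow: "\<forall>x\<in>W. A * norm x^2 \<le> (\<integral>y. (x \<bullet> y)^2 \<partial>M)"
    using assms(4) unfolding prob_frame_def by blast
  have mc: "borel_measurable M = (borel_measurable borel :: (real^'n \<Rightarrow> real^'n) set)"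
    by (rule measurable_cong_sets[OF sM refl])
  have measM: "f \<in> borel_measurable M" if "f \<in> borel_measurable borel" for f :: "real^'n \<Rightarrow> real^'n"
    using that mc by simp
  have idM: "(\<lambda>y. y) \<in> borel_measurable M" by (simp add: mc)
  have TM: "T \<in> borel_measurable M" using measM assms(5) by blast
  have nm: "(\<lambda>y::real^'n. norm y ^ 2) \<in> borel_measurable borel" by measurable
  define P where "P = oblique_proj W (orth_comp V)"
  define Q where "Q = oblique_proj V (orth_comp W)"
  have QP: "Q = transpose P" using ds_dual(2)[OF assms(1,2,3)] by (simp add: P_def Q_def)
  define S where "S = frame_operator M"
  define Z where "Z = mp_inverse S"
  have intS: "integrable M (\<lambda>y. outer y y)" using integrable_outer[OF idM idM intM intM] by simp
  have Sdef: "S = (\<integral>y. outer y y \<partial>M)" by (simp add: S_def frame_operator_def)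
  define Pi where "Pi = oblique_proj W (orth_comp W)"
  have dsW: "direct_sum_UNIV W (orth_comp W)" by (rule ds_orth[OF assms(1)])
  have PiW: "Pi *v w = w" if "w \<in> W" for w
    using oproj_eq[OF dsW that, of w] subspace_0[OF subspace_orth_comp[of W]] by (simp add: Pi_def)
  have Pi_in: "Pi *v x \<in> W" for x using oproj_prop(1)[OF dsW] by (simp add: Pi_def)
  have tPi: "transpose Pi = Pi" using ds_dual(2)[OF assms(1) assms(1) dsW] by (simp add: Pi_def)
  have PiPi: "Pi ** Pi = Pi" unfolding matrix_eq
    by (simp add: matrix_vector_mul_assoc[symmetric] PiW Pi_in)
  have Pi_int: "Pi ** (\<integral>y. outer y (g y) \<partial>M) = (\<integral>y. outer y (g y) \<partial>M)"
    if gm: "g \<in> borel_measurable M" and gi: "integrable M (\<lambda>y. outer y (g y))" for g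
  proof -
    have "Pi ** (\<integral>y. outer y (g y) \<partial>M) = (\<integral>y. Pi ** outer y (g y) \<partial>M)"
      by (rule integral_bounded_linear[OF bl_mml gi, symmetric])
    also have "\<dots> = (\<integral>y. outer y (g y) \<partial>M)"
    proof (rule integral_cong_AE)
      show "(\<lambda>y. Pi ** outer y (g y)) \<in> borel_measurable M"
        unfolding outer_mult_left by (rule measurable_outer[OF meas_mv[OF idM] gm])
      show "(\<lambda>y. outer y (g y)) \<in> borel_measurable M" by (rule measurable_outer[OF idM gm])
      show "AE y in M. Pi ** outer y (g y) = outer y (g y)"
        using AEW by eventually_elim (simp add: outer_mult_left PiW)
    qed
    finally show ?thesis .
  qed
  have tS: "transpose S = S"
  proof -
    have "transpose S = (\<integral>y. transpose (outer y y) \<partial>M)"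
      unfolding Sdef by (rule integral_bounded_linear[OF bl_transpose intS, symmetric])
    then show ?thesis by (simp add: transpose_outer Sdef)
  qed
  have PiS: "Pi ** S = S" using Pi_int[of "\<lambda>y. y"] idM intS by (simp add: Sdef)
  have SPi: "S ** Pi = S" by (metis PiS tS tPi matrix_transpose_mul)
  have quad: "(S *v x) \<bullet> x = (\<integral>y. (x \<bullet> y)^2 \<partial>M)" for x
  proof -
    have "(S *v x) \<bullet> x = (\<integral>y. (outer y y *v x) \<bullet> x \<partial>M)"
      unfolding Sdef by (rule integral_bounded_linear[OF bl_quad intS, symmetric])
    also have "\<dots> = (\<integral>y. (x \<bullet> y)^2 \<partial>M)" by (simp add: outer_mulv power2_eq_square inner_commute)
    finally show ?thesis .
  qed
  have inj: "x = 0" if "(S + mat 1 - Pi) *v x = 0" for x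
  proof -
    have e: "S *v x + x - Pi *v x = 0" using that
      by (simp add: matrix_vector_mult_add_rdistrib matrix_vector_mult_diff_rdistrib)
    have "Pi *v (S *v x + x - Pi *v x) = 0" using e by simp
    then have "(Pi ** S) *v x + Pi *v x - (Pi ** Pi) *v x = 0"
      by (simp add: matrix_vector_right_distrib matrix_vector_mult_diff_distrib matrix_vector_mul_assoc)
    then have Sx: "S *v x = 0" using PiS PiPi by simp
    then have "x = Pi *v x" using e by simp
    then have xW: "x \<in> W" using Pi_in by metis
    have "A * norm x^2 \<le> (\<integral>y. (x \<bullet> y)^2 \<partial>M)" using Alow xW by blast
    then have "A * norm x^2 \<le> 0" using quad[of x] Sx by simp
    then have "norm x^2 \<le> 0" using A0 by (simp add: mult_le_0_iff)
    then show "x = 0" by simp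
  qed
  have Zp: "transpose Z = Z \<and> S ** Z = Pi"
    unfolding Z_def by (rule mp_exists[OF tS tPi PiPi SPi PiS inj])
  have PinW: "P *v x \<in> W" for x using oproj_prop(1)[OF assms(3)] by (simp add: P_def)
  have PiP: "Pi ** P = P" unfolding matrix_eq
    by (simp add: matrix_vector_mul_assoc[symmetric] PiW PinW)
  have goal: "(P2 V (distr M borel T) \<and> (\<integral>x. outer x (T x) \<partial>M) = P) \<longleftrightarrow>
         (\<exists>h :: real^'n \<Rightarrow> real^'n. h \<in> borel_measurable borel \<and> (\<forall>x\<in>W. h x \<in> V) \<and>
            P2 V (distr M borel h) \<and>
            (\<forall>x\<in>W. T x = Q *v (Z *v x) + h x - (\<integral>y. ((Z *v x) \<bullet> y) *\<^sub>R h y \<partial>M)))"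
  proof
    assume L: "P2 V (distr M borel T) \<and> (\<integral>x. outer x (T x) \<partial>M) = P"
    have intT2: "integrable M (\<lambda>x. norm (T x)^2)"
      using L integrable_distr_eq[OF TM nm] unfolding P2_def by auto
    have intTo: "integrable M (\<lambda>x. outer x (T x))" using integrable_outer[OF idM TM intM intT2] by simp
    show "\<exists>h :: real^'n \<Rightarrow> real^'n. h \<in> borel_measurable borel \<and> (\<forall>x\<in>W. h x \<in> V) \<and>
            P2 V (distr M borel h) \<and>
            (\<forall>x\<in>W. T x = Q *v (Z *v x) + h x - (\<integral>y. ((Z *v x) \<bullet> y) *\<^sub>R h y \<partial>M))"
    proof (intro exI[of _ T] conjI ballI)
      show "T \<in> borel_measurable borel" by (rule assms(5))
      show "T x \<in> V" if "x \<in> W" for x using assms(6) that by blast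
      show "P2 V (distr M borel T)" using L by blast
      fix x assume "x \<in> W"
      have "(\<integral>y. ((Z *v x) \<bullet> y) *\<^sub>R T y \<partial>M) = transpose P *v (Z *v x)"
        using integral_apply[OF intTo, of "Z *v x"] L by simp
      then show "T x = Q *v (Z *v x) + T x - (\<integral>y. ((Z *v x) \<bullet> y) *\<^sub>R T y \<partial>M)"
        by (simp add: QP)
    qed
  next
    assume "\<exists>h :: real^'n \<Rightarrow> real^'n. h \<in> borel_measurable borel \<and> (\<forall>x\<in>W. h x \<in> V) \<and>
            P2 V (distr M borel h) \<and>
            (\<forall>x\<in>W. T x = Q *v (Z *v x) + h x - (\<integral>y. ((Z *v x) \<bullet> y) *\<^sub>R h y \<partial>M))"
    then obtain h where hm: "h \<in> borel_measurable borel" and hP2: "P2 V (distr M borel h)"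
      and hT: "\<forall>x\<in>W. T x = Q *v (Z *v x) + h x - (\<integral>y. ((Z *v x) \<bullet> y) *\<^sub>R h y \<partial>M)" by blast
    have hM: "h \<in> borel_measurable M" using measM hm by blast
    have inth2: "integrable M (\<lambda>x. norm (h x)^2)"
      using hP2 integrable_distr_eq[OF hM nm] unfolding P2_def by auto
    have intho: "integrable M (\<lambda>x. outer x (h x))" using integrable_outer[OF idM hM intM inth2] by simp
    define H where "H = (\<integral>y. outer y (h y) \<partial>M)"
    define L where "L = Q ** Z - transpose H ** Z"
    have TL: "T x = L *v x + h x" if "x \<in> W" for x
      using bspec[OF hT that] integral_apply[OF intho, of "Z *v x"]
      by (simp add: L_def H_def matrix_vector_mult_diff_rdistrib matrix_vector_mul_assoc algebra_simps)
    have AET: "AE x in M. T x = L *v x + h x" using AEW by eventually_elim (simp add: TL)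
    have T'M: "(\<lambda>x. L *v x + h x) \<in> borel_measurable M"
      using meas_mv[OF idM, of L] hM by (intro borel_measurable_add) auto
    obtain K where K: "\<And>x. norm (L *v x) \<le> norm x * K"
      using bounded_linear.pos_bounded[OF matrix_vector_mul_bounded_linear[of L]] by blast
    have intT2: "integrable M (\<lambda>x. norm (T x)^2)"
    proof (rule Bochner_Integration.integrable_bound[where f="\<lambda>x. 2*K^2 * norm x^2 + 2 * norm (h x)^2"])
      show "integrable M (\<lambda>x. 2*K^2 * norm x^2 + 2 * norm (h x)^2)"
        using intM inth2 by (intro Bochner_Integration.integrable_add integrable_mult_right)
      show "(\<lambda>x. norm (T x)^2) \<in> borel_measurable M" using TM by measurable
      show "AE x in M. norm (norm (T x)^2) \<le> norm (2*K^2 * norm x^2 + 2 * norm (h x)^2)"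
        using AET
      proof eventually_elim
        case (elim x)
        have a: "norm (T x) \<le> norm x * K + norm (h x)"
          using elim K[of x] norm_triangle_ineq[of "L *v x" "h x"] by simp
        have "norm (T x)^2 \<le> (norm x * K + norm (h x))^2"
          using a power_mono norm_ge_zero by blast
        also have "\<dots> = (norm x * K)^2 + 2 * (norm x * K) * norm (h x) + norm (h x)^2"
          by (simp add: power2_sum)
        also have "\<dots> \<le> 2*K^2 * norm x^2 + 2 * norm (h x)^2"
          using sum_squares_bound[of "norm x * K" "norm (h x)"] by (simp add: power_mult_distrib mult.commute add.commute)
        finally have "norm (T x)^2 \<le> 2*K^2 * norm x^2 + 2 * norm (h x)^2" .
        then show ?case by simp
      qed
    qed
    have Vb: "V \<in> sets borel" using closed_subspace[OF assms(2)] by simp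
    have P2T: "P2 V (distr M borel T)" unfolding P2_def
    proof (intro conjI)
      show "prob_space (distr M borel T)" by (rule prob_space.prob_space_distr[OF ps TM])
      show "sets (distr M borel T) = sets borel" by simp
      have "AE x in M. T x \<in> V" using AEW by eventually_elim (simp add: assms(6))
      then show "AE y in distr M borel T. y \<in> V"
        using AE_distr_iff[OF TM, of "\<lambda>y. y \<in> V"] Vb by simp
      show "integrable (distr M borel T) (\<lambda>y. norm y^2)"
        using integrable_distr_eq[OF TM nm] intT2 by simp
    qed
    have "(\<integral>x. outer x (T x) \<partial>M) = (\<integral>x. outer x (L *v x + h x) \<partial>M)"
    proof (rule integral_cong_AE)
      show "(\<lambda>x. outer x (T x)) \<in> borel_measurable M" by (rule measurable_outer[OF idM TM])
      show "(\<lambda>x. outer x (L *v x + h x)) \<in> borel_measurable M" by (rule measurable_outer[OF idM T'M])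
      show "AE x in M. outer x (T x) = outer x (L *v x + h x)" using AET by eventually_elim simp
    qed
    also have "\<dots> = (\<integral>x. outer x x ** transpose L + outer x (h x) \<partial>M)"
      by (simp add: outer_add_right outer_mult_right)
    also have "\<dots> = S ** transpose L + H"
      using Bochner_Integration.integral_add[OF integrable_bounded_linear[OF bl_mmr[of "transpose L"] intS] intho]
        integral_bounded_linear[OF bl_mmr[of "transpose L"] intS]
      by (simp add: Sdef H_def)
    also have "S ** transpose L = P - H"
    proof -
      have "transpose L = Z ** P - Z ** H"
        using Zp by (simp add: L_def QP transpose_diff matrix_transpose_mul)
      then have "S ** transpose L = (S ** Z) ** P - (S ** Z) ** H"
        by (simp add: mm_diff_l matrix_mul_assoc)
      also have "\<dots> = P - H" using Zp PiP Pi_int[OF hM intho] by (simp add: H_def)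
      finally show ?thesis .
    qed
    finally show "P2 V (distr M borel T) \<and> (\<integral>x. outer x (T x) \<partial>M) = P" using P2T by simp
  qed
  then show ?thesis by (simp add: P_def Q_def Z_def S_def)
qed


end
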